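(* Let $k$ be a field of characteristic $p>0$, let $d_1,\ldots,d_n$ be positive integers and $A = k[x_1,\ldots,x_n]/(x_1^{d_1}, \ldots, x_n^{d_n})$. Write $d_i = N_i p + r_i$ with $N_i$ integers and $0 < r_i \le p$, and let $N = \sum_{i=1}^n N_i$. Let $0\le j \le n$ with $j\le N+1$, and let $m=N-j+1$. Then $$\ell^{mp} \cdot x_1^{r_1} x_2^{r_2} \cdots x_j^{r_j} = 0$$ in $A$ for every linear form $\ell$, where the monomial $x_1^{r_1} \cdots x_j^{r_j}$ is interpreted as $1$ when $j=0$.
   Context: A linear form is an element $c_1x_1+\cdots+c_nx_n$ with $c_i\in k$. *)

theory Defs
  imports "HOL-Library.Poly_Mapping"
begin

text \<open>The paper's variables x_1..x_n correspond to x_0..x_{n-1} here.\<close>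

type_synonym 'a mpoly = "(nat \<Rightarrow>\<^sub>0 nat) \<Rightarrow>\<^sub>0 'a"

definition Var :: "nat \<Rightarrow> 'a::comm_ring_1 mpoly" where
  "Var i = Poly_Mapping.single (Poly_Mapping.single i 1) 1"

definition Const :: "'a::comm_ring_1 \<Rightarrow> 'a mpoly" where
  "Const c = Poly_Mapping.single 0 c"

definition linear_form :: "nat \<Rightarrow> 'a::comm_ring_1 mpoly \<Rightarrow> bool" where
  "linear_form n l \<longleftrightarrow> (\<exists>c. l = (\<Sum>i<n. Const (c i) * Var i))"

definition zero_in_A :: "nat \<Rightarrow> (nat \<Rightarrow> nat) \<Rightarrow> 'a::comm_ring_1 mpoly \<Rightarrow> bool" where
  "zero_in_A n d f \<longleftrightarrow> (\<exists>g :: nat \<Rightarrow> 'a mpoly. f = (\<Sum>i<n. g i * Var i ^ d i))"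

end

theory Submission
  imports Defs "HOL-Computational_Algebra.Primes"
begin

lemma zA_zero: "zero_in_A n d 0"
  unfolding zero_in_A_def by (rule exI[of _ "\<lambda>_. 0"]) simp

lemma zA_add: "zero_in_A n d f \<Longrightarrow> zero_in_A n d g \<Longrightarrow> zero_in_A n d (f + g)"
  unfolding zero_in_A_def
proof (elim exE)
  fix a b :: "nat \<Rightarrow> 'a mpoly"
  assume "f = (\<Sum>i<n. a i * Var i ^ d i)" "g = (\<Sum>i<n. b i * Var i ^ d i)"
  then show "\<exists>c. f + g = (\<Sum>i<n. c i * Var i ^ d i)"
    by (intro exI[of _ "\<lambda>i. a i + b i"]) (simp add: sum.distrib distrib_right)
qed

lemma zA_mult: "zero_in_A n d f \<Longrightarrow> zero_in_A n d (h * f)"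
  unfolding zero_in_A_def
proof (elim exE)
  fix a :: "nat \<Rightarrow> 'a mpoly"
  assume "f = (\<Sum>i<n. a i * Var i ^ d i)"
  then show "\<exists>c. h * f = (\<Sum>i<n. c i * Var i ^ d i)"
    by (intro exI[of _ "\<lambda>i. h * a i"]) (simp add: sum_distrib_left mult.assoc)
qed

lemma zA_sum: "(\<And>x. x \<in> A \<Longrightarrow> zero_in_A n d (F x)) \<Longrightarrow> zero_in_A n d (\<Sum>x\<in>A. F x)"
  by (induction A rule: infinite_finite_induct) (auto intro: zA_zero zA_add)

lemma zA_gen: "i < n \<Longrightarrow> zero_in_A n d (h * Var i ^ d i)"
  unfolding zero_in_A_def
proof (rule exI[of _ "\<lambda>k. if k = i then h else 0"])
  assume "i < n"
  have "(\<Sum>k<n. (if k = i then h else 0) * Var k ^ d k) = (\<Sum>k<n. if k = i then h * Var k ^ d k else 0)"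
    by (rule sum.cong) auto
  also have "\<dots> = h * Var i ^ d i" using \<open>i < n\<close> by (simp add: sum.delta)
  finally show "h * Var i ^ d i = (\<Sum>k<n. (if k = i then h else 0) * Var k ^ d k)" by simp
qed

definition Xm :: "nat \<Rightarrow> (nat \<Rightarrow> nat) \<Rightarrow> 'a::comm_ring_1 mpoly" where
  "Xm n s = (\<Prod>i<n. Var i ^ s i)"

lemma Xm_upd:
  assumes "i < n"
  shows "Var i ^ k * Xm n s = (Xm n (s(i := s i + k)) :: 'a::comm_ring_1 mpoly)"
proof -
  have "Xm n s = (Var i ^ s i :: 'a mpoly) * (\<Prod>k\<in>{..<n}-{i}. Var k ^ s k)"
    unfolding Xm_def using assms by (simp add: prod.remove)
  moreover have "Xm n (s(i := s i + k)) = (Var i ^ (s i + k) :: 'a mpoly) * (\<Prod>k\<in>{..<n}-{i}. Var k ^ s k)"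
    unfolding Xm_def using assms by (simp add: prod.remove)
  ultimately show ?thesis by (simp add: power_add algebra_simps)
qed

lemma Xm_in:
  assumes "i < n" "d i \<le> s i"
  shows "zero_in_A n d (Xm n s :: 'a::comm_ring_1 mpoly)"
proof -
  have "(Var i ^ d i :: 'a mpoly) * Xm n (s(i := s i - d i)) = Xm n s"
    using Xm_upd[OF assms(1), of "d i" "s(i := s i - d i)"] assms by (simp add: fun_upd_idem)
  then show ?thesis using zA_gen[OF assms(1), where h="Xm n (s(i := s i - d i))" and d=d] by (metis mult.commute)
qed

lemma main:
  fixes c :: "nat \<Rightarrow> 'a::comm_ring_1" and p :: nat
  assumes p: "p > 0"
  shows "(\<exists>i<n. d i \<le> s i) \<or> (\<Sum>i<n. (d i - s i + p - 1) div p - 1) < m \<Longrightarrow>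
     zero_in_A n d ((\<Sum>i<n. Const (c i) * Var i ^ p)^m * Xm n s)"
proof (induction m arbitrary: s)
  case 0
  then obtain i where "i < n" "d i \<le> s i" by auto
  then show ?case using Xm_in zA_mult by blast
next
  case (Suc m)
  define L where "L = (\<Sum>i<n. Const (c i) * Var i ^ p :: 'a mpoly)"
  define f where "f = (\<lambda>s i. (d i - s i + p - 1) div p - 1)"
  show ?case
  proof (cases "\<exists>i<n. d i \<le> s i")
    case True
    then obtain i where "i < n" "d i \<le> s i" by auto
    then show ?thesis using Xm_in zA_mult by blast
  next
    case False
    then have lt: "\<And>i. i < n \<Longrightarrow> s i < d i" by force
    from False Suc.prems have S: "(\<Sum>i<n. f s i) < Suc m" unfolding f_def by auto
    have eq: "L ^ Suc m * Xm n s = (\<Sum>i<n. Const (c i) * (L ^ m * Xm n (s(i := s i + p))))"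
    proof -
      have "L ^ Suc m * Xm n s = L^m * (\<Sum>i<n. Const (c i) * (Var i ^ p * Xm n s))"
      proof -
        have "L * Xm n s = (\<Sum>i<n. Const (c i) * (Var i ^ p * Xm n s))"
          unfolding L_def by (simp add: sum_distrib_right mult.assoc)
        then show ?thesis by (metis mult.assoc mult.left_commute power_Suc)
      qed
      also have "\<dots> = L^m * (\<Sum>i<n. Const (c i) * Xm n (s(i := s i + p)))"
        by (intro arg_cong[where f="\<lambda>x. L^m * x"] sum.cong refl) (simp add: Xm_upd)
      finally show ?thesis by (simp add: sum_distrib_left algebra_simps)
    qed
    have "zero_in_A n d (L ^ m * Xm n (s(i := s i + p)))" if i: "i < n" for i
    proof (cases "d i \<le> s i + p")
      case True
      then show ?thesis using Xm_in[of i n d "s(i := s i + p)"] i zA_mult by fastforce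
    next
      case False
      have fi: "f (s(i := s i + p)) i + 1 \<le> f s i"
      proof -
        define a where "a = d i - (s i + p) + p - 1"
        have "d i - s i + p - 1 = a + p" using False unfolding a_def by simp
        then have "(d i - s i + p - 1) div p = (a + p) div p" by simp
        also have "\<dots> = a div p + 1" using p by (simp add: div_add_self2)
        finally have "(d i - s i + p - 1) div p = (d i - (s i + p) + p - 1) div p + 1" unfolding a_def .
        moreover have "(d i - (s i + p) + p - 1) div p \<ge> 1"
        proof -
          have "p \<le> d i - (s i + p) + p - 1" using False by simp
          then have "p div p \<le> (d i - (s i + p) + p - 1) div p" by (rule div_le_mono)
          then show ?thesis using p by simp
        qed
        ultimately show ?thesis unfolding f_def by simp
      qed
      have "(\<Sum>k<n. f (s(i := s i + p)) k) = f (s(i := s i + p)) i + (\<Sum>k\<in>{..<n}-{i}. f (s(i := s i + p)) k)"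
        using i by (simp add: sum.remove)
      also have "(\<Sum>k\<in>{..<n}-{i}. f (s(i := s i + p)) k) = (\<Sum>k\<in>{..<n}-{i}. f s k)"
        by (rule sum.cong) (auto simp: f_def)
      also have "(\<Sum>k<n. f s k) = f s i + (\<Sum>k\<in>{..<n}-{i}. f s k)"
        using i by (simp add: sum.remove)
      ultimately have "(\<Sum>k<n. f (s(i := s i + p)) k) < m" using S fi by linarith
      then show ?thesis using Suc.IH unfolding L_def f_def by blast
    qed
    note each = this
    have "zero_in_A n d (\<Sum>i<n. Const (c i) * (L ^ m * Xm n (s(i := s i + p))))"
      by (rule zA_sum, rule zA_mult) (use each in auto)
    then show ?thesis using eq unfolding L_def by simp
  qed
qed

lemma Const_power: "(Const a :: 'a::comm_ring_1 mpoly) ^ k = Const (a ^ k)"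
  by (induction k) (simp_all add: Const_def mult_single)

lemma CHAR_mpoly: "CHAR('a::comm_ring_1 mpoly) = CHAR('a)"
proof (rule CHAR_eqI)
  show "of_nat CHAR('a) = (0 :: 'a mpoly)"
    by (metis of_nat_CHAR single_of_nat single_zero)
  fix x assume "of_nat x = (0 :: 'a mpoly)"
  then have "(of_nat x :: 'a) = 0"
    by (metis inj_single injD single_of_nat single_zero)
  then show "CHAR('a) dvd x" by (simp add: of_nat_eq_0_iff_char_dvd)
qed

lemma div_helper: "t < (p::nat) \<Longrightarrow> (q * p + t) div p = q"
  by (metis add.commute add_cancel_right_right div_less div_mult_self1 gr_implies_not0 not_less_zero)

theorem lemma3p2:
  fixes p n j :: nat and d r :: "nat \<Rightarrow> nat" and N :: "nat \<Rightarrow> int"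
    and l :: "'a::field mpoly"
  assumes char: "CHAR('a) = p" and p_pos: "p > 0"
    and d_pos: "\<forall>i<n. d i > 0"
    and d_decomp: "\<forall>i<n. int (d i) = N i * int p + int (r i)"
    and r_bounds: "\<forall>i<n. 0 < r i \<and> r i \<le> p"
    and j_le_n: "j \<le> n"
    and j_le_N: "int j \<le> (\<Sum>i<n. N i) + 1"
    and lin: "linear_form n l"
  shows "zero_in_A n d
           (l ^ nat (((\<Sum>i<n. N i) - int j + 1) * int p) * (\<Prod>i<j. Var i ^ r i))"
proof -
  obtain c where c: "l = (\<Sum>i<n. Const (c i) * Var i)" using lin unfolding linear_form_def by blast
  have primeA: "prime CHAR('a)" using char p_pos prime_CHAR_semidom by blast
  have charM: "CHAR('a mpoly) = p" using CHAR_mpoly[where 'a='a] char by simp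
  have lp: "l ^ p = (\<Sum>i<n. Const (c i ^ p) * Var i ^ p)"
  proof -
    have "l ^ p = (\<Sum>i<n. (Const (c i) * Var i) ^ p)"
      unfolding c by (rule freshmans_dream_sum) (use primeA charM char in auto)
    then show ?thesis by (simp add: power_mult_distrib Const_power)
  qed
  have Nnn: "N i \<ge> 0" if "i < n" for i
  proof (rule ccontr)
    assume "\<not> N i \<ge> 0"
    then have "N i \<le> -1" by simp
    then have "N i * int p \<le> - int p" using mult_right_mono[of "N i" "-1" "int p"] by simp
    moreover have "int (d i) = N i * int p + int (r i)" "r i \<le> p" "d i > 0"
      using d_decomp d_pos r_bounds that by auto
    ultimately show False by linarith
  qed
  define M where "M i = nat (N i)" for i
  have dM: "d i = M i * p + r i" if "i < n" for i
  proof -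
    have "int (d i) = N i * int p + int (r i)" using d_decomp that by auto
    also have "N i = int (M i)" unfolding M_def using Nnn[OF that] by simp
    finally have "int (d i) = int (M i * p + r i)" by simp
    then show ?thesis by (simp only: of_nat_eq_iff)
  qed
  have sumN: "(\<Sum>i<n. N i) = int (\<Sum>i<n. M i)"
    unfolding M_def using Nnn by simp
  define m where "m = nat ((\<Sum>i<n. N i) - int j + 1)"
  have expo: "nat (((\<Sum>i<n. N i) - int j + 1) * int p) = p * m"
    unfolding m_def using j_le_N by (simp add: nat_mult_distrib mult.commute)
  define s where "s i = (if i < j then r i else 0)" for i
  have Xs: "Xm n s = (\<Prod>i<j. Var i ^ r i :: 'a mpoly)"
  proof -
    have "{..<n} = {..<j} \<union> {j..<n}" using j_le_n by auto
    then have "Xm n s = (\<Prod>i<j. Var i ^ s i) * (\<Prod>i\<in>{j..<n}. Var i ^ s i :: 'a mpoly)"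
      unfolding Xm_def by (simp add: prod.union_disjoint ivl_disj_int)
    also have "(\<Prod>i\<in>{j..<n}. Var i ^ s i :: 'a mpoly) = 1" by (simp add: s_def)
    also have "(\<Prod>i<j. Var i ^ s i :: 'a mpoly) = (\<Prod>i<j. Var i ^ r i)" by (simp add: s_def)
    finally show ?thesis by simp
  qed
  have cond: "(\<exists>i<n. d i \<le> s i) \<or> (\<Sum>i<n. (d i - s i + p - 1) div p - 1) < m"
  proof (cases "\<exists>i<j. M i = 0")
    case True
    then obtain i where "i < j" "M i = 0" by auto
    then have "d i \<le> s i" using dM[of i] j_le_n unfolding s_def by simp
    moreover have "i < n" using \<open>i < j\<close> j_le_n by simp
    ultimately show ?thesis by blast
  next
    case False
    have g1: "(d i - s i + p - 1) div p - 1 + (if i < j then 1 else 0) = M i" if "i < n" for i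
    proof (cases "i < j")
      case True
      then have "d i - s i + p - 1 = M i * p + (p - 1)" using dM[OF that] p_pos unfolding s_def by simp
      moreover have "(M i * p + (p - 1)) div p = M i" using p_pos by (intro div_helper) simp
      ultimately show ?thesis using True False by simp
    next
      case f: False
      have rb: "0 < r i" "r i \<le> p" using r_bounds that by auto
      have "d i - s i + p - 1 = (M i + 1) * p + (r i - 1)" using dM[OF that] rb f unfolding s_def by simp
      moreover have "((M i + 1) * p + (r i - 1)) div p = M i + 1" using p_pos rb by (intro div_helper) simp
      ultimately show ?thesis using f by simp
    qed
    have "(\<Sum>i<n. (d i - s i + p - 1) div p - 1) + (\<Sum>i<n. (if i < j then 1 else 0 :: nat)) = (\<Sum>i<n. M i)"
      unfolding sum.distrib[symmetric] using g1 by (intro sum.cong) auto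
    moreover have "(\<Sum>i<n. (if i < j then 1 else 0 :: nat)) = j"
    proof -
      have "(\<Sum>i<n. (if i < j then 1 else 0 :: nat)) = card ({..<n} \<inter> {i. i < j})"
        by (simp add: sum.If_cases)
      also have "{..<n} \<inter> {i. i < j} = {..<j}" using j_le_n by auto
      finally show ?thesis by simp
    qed
    ultimately show ?thesis unfolding m_def sumN by linarith
  qed
  have "zero_in_A n d ((\<Sum>i<n. Const (c i ^ p) * Var i ^ p)^m * Xm n s)"
    by (rule main[OF p_pos cond])
  then show ?thesis unfolding expo power_mult lp[symmetric] Xs .
qed

end
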